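(* Let $f:\mathbb{R}^m\to\mathbb{R}$ be $C^2$, let $\delta_0,\dots,\delta_m$ be distinct reals, $\tau>0$, and let $x\in\mathbb{R}^m$ with $\nabla f(x)\neq0$. With $A(x)$ and $w(x)$ as defined in the context: (1) $\|\nabla f(x)\|/\mathrm{sp}(A(x))\le\|w(x)\|\le\|\nabla f(x)\|/\mathrm{minsp}(A(x))$; (2) $\|\nabla f(x)\|^2/\mathrm{sp}(A(x))\le\langle w(x),\nabla f(x)\rangle\le\|\nabla f(x)\|^2/\mathrm{minsp}(A(x))$ and $\mathrm{minsp}(A(x))\|w(x)\|^2\le\langle w(x),\nabla f(x)\rangle\le\mathrm{sp}(A(x))\|w(x)\|^2$; (3) there is $\bar\gamma>0$ such that for all $0<\gamma<\bar\gamma$, $f(x-\gamma w(x))-f(x)\le-\gamma\langle w(x),\nabla f(x)\rangle/3$.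
   Context: For a real symmetric matrix $A$, $\mathrm{sp}(A)$ (resp. $\mathrm{minsp}(A)$) is the maximum (resp. minimum) of $|\lambda|$ over eigenvalues $\lambda$ of $A$. For an invertible real symmetric $A$, $pr_{A,+}$ (resp. $pr_{A,-}$) is the orthogonal projection onto the span of eigenvectors of $A$ with positive (resp. negative) eigenvalues. Let $\kappa:=\frac12\min_{i\ne j}|\delta_i-\delta_j|$. For $x$ with $\nabla f(x)\ne0$: $\delta(x):=\delta_j$ where $j$ is the smallest index in $\{0,\dots,m\}$ with $\mathrm{minsp}(\nabla^2f(x)+\delta_j\|\nabla f(x)\|^{\tau}I)\ge\kappa\|\nabla f(x)\|^{\tau}$ (such $j$ exists); $A(x):=\nabla^2 f(x)+\delta(x)\|\nabla f(x)\|^{\tau}I$; $v(x):=A(x)^{-1}\nabla f(x)$; $w(x):=pr_{A(x),+}v(x)-pr_{A(x),-}v(x)$. *)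

theory Defs
  imports "HOL-Analysis.Analysis"
begin

definition mat_eigenvalues :: "real^'n^'n \<Rightarrow> real set" where
  "mat_eigenvalues A = {l. \<exists>v. v \<noteq> 0 \<and> A *v v = l *\<^sub>R v}"

definition sp :: "real^'n^'n \<Rightarrow> real" where
  "sp A = Max (abs ` mat_eigenvalues A)"

definition minsp :: "real^'n^'n \<Rightarrow> real" where
  "minsp A = Min (abs ` mat_eigenvalues A)"

definition orth_proj :: "('a::real_inner) set \<Rightarrow> 'a \<Rightarrow> 'a" where
  "orth_proj S v = (THE p. p \<in> S \<and> (\<forall>s\<in>S. inner (v - p) s = 0))"

definition pr_pos :: "real^'n^'n \<Rightarrow> real^'n \<Rightarrow> real^'n" where
  "pr_pos A = orth_proj (span {v. \<exists>l>0. A *v v = l *\<^sub>R v})"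

definition pr_neg :: "real^'n^'n \<Rightarrow> real^'n \<Rightarrow> real^'n" where
  "pr_neg A = orth_proj (span {v. \<exists>l<0. A *v v = l *\<^sub>R v})"

definition kappa :: "(nat \<Rightarrow> real) \<Rightarrow> nat \<Rightarrow> real" where
  "kappa \<delta> m = Min {\<bar>\<delta> i - \<delta> j\<bar> | i j. i \<le> m \<and> j \<le> m \<and> i \<noteq> j} / 2"

definition delta_sel :: "(nat \<Rightarrow> real) \<Rightarrow> real \<Rightarrow> real^'n^'n \<Rightarrow> real^'n \<Rightarrow> real" where
  "delta_sel \<delta> \<tau> H g =
     \<delta> (LEAST j. j \<le> CARD('n) \<and>
         minsp (H + (\<delta> j * norm g powr \<tau>) *\<^sub>R mat 1) \<ge> kappa \<delta> CARD('n) * norm g powr \<tau>)"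

definition A_mat :: "(nat \<Rightarrow> real) \<Rightarrow> real \<Rightarrow> real^'n^'n \<Rightarrow> real^'n \<Rightarrow> real^'n^'n" where
  "A_mat \<delta> \<tau> H g = H + (delta_sel \<delta> \<tau> H g * norm g powr \<tau>) *\<^sub>R mat 1"

definition v_vec :: "(nat \<Rightarrow> real) \<Rightarrow> real \<Rightarrow> real^'n^'n \<Rightarrow> real^'n \<Rightarrow> real^'n" where
  "v_vec \<delta> \<tau> H g = matrix_inv (A_mat \<delta> \<tau> H g) *v g"

definition w_vec :: "(nat \<Rightarrow> real) \<Rightarrow> real \<Rightarrow> real^'n^'n \<Rightarrow> real^'n \<Rightarrow> real^'n" where
  "w_vec \<delta> \<tau> H g =
     pr_pos (A_mat \<delta> \<tau> H g) (v_vec \<delta> \<tau> H g) - pr_neg (A_mat \<delta> \<tau> H g) (v_vec \<delta> \<tau> H g)"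

end

theory Submission
  imports Defs
begin


lemma sym_dot:
  fixes A :: "real^'n^'n"
  assumes "transpose A = A"
  shows "(A *v x) \<bullet> y = x \<bullet> (A *v y)"
proof -
  have "A *v x = x v* A" using vector_transpose_matrix[of x A] assms by simp
  then show ?thesis by (simp add: dot_lmul_matrix)
qed

lemma ortho_coeff:
  fixes B :: "'a::real_inner set"
  assumes fin: "finite B" and po: "pairwise orthogonal B" and n1: "\<forall>u\<in>B. norm u = 1"
    and u0: "u0 \<in> B"
  shows "(\<Sum>u\<in>B. c u *\<^sub>R u) \<bullet> u0 = c u0"
proof -
  have "(\<Sum>u\<in>B. c u *\<^sub>R u) \<bullet> u0 = (\<Sum>u\<in>B. c u * (u \<bullet> u0))"
    by (simp add: inner_sum_left)
  also have "\<dots> = c u0 * (u0 \<bullet> u0) + (\<Sum>u\<in>B-{u0}. c u * (u \<bullet> u0))"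
    using sum.remove[OF fin u0] by simp
  also have "(\<Sum>u\<in>B-{u0}. c u * (u \<bullet> u0)) = 0"
    using po u0 by (intro sum.neutral) (auto simp: pairwise_def orthogonal_def)
  also have "u0 \<bullet> u0 = 1" using n1 u0 by (simp add: dot_square_norm)
  finally show ?thesis by simp
qed

lemma parseval:
  fixes B :: "'a::real_inner set"
  assumes fin: "finite B" and po: "pairwise orthogonal B" and n1: "\<forall>u\<in>B. norm u = 1"
  shows "(\<Sum>u\<in>B. a u *\<^sub>R u) \<bullet> (\<Sum>u\<in>B. b u *\<^sub>R u) = (\<Sum>u\<in>B. a u * b u)"
proof -
  have "(\<Sum>u\<in>B. a u *\<^sub>R u) \<bullet> (\<Sum>u\<in>B. b u *\<^sub>R u) = (\<Sum>u\<in>B. a u * ((\<Sum>u\<in>B. b u *\<^sub>R u) \<bullet> u))"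
    by (simp add: inner_sum_left inner_commute)
  also have "\<dots> = (\<Sum>u\<in>B. a u * b u)"
    using ortho_coeff[OF fin po n1] by (intro sum.cong) auto
  finally show ?thesis .
qed

lemma ortho_expand:
  fixes B :: "'a::euclidean_space set"
  assumes fin: "finite B" and po: "pairwise orthogonal B" and n1: "\<forall>u\<in>B. norm u = 1"
    and sp: "span B = UNIV"
  shows "x = (\<Sum>u\<in>B. (x \<bullet> u) *\<^sub>R u)"
proof -
  define d where "d = x - (\<Sum>u\<in>B. (x \<bullet> u) *\<^sub>R u)"
  have "\<And>u0. u0 \<in> B \<Longrightarrow> orthogonal d u0"
    unfolding d_def orthogonal_def using ortho_coeff[OF fin po n1] by (simp add: inner_diff_left)
  then have "orthogonal d d" using orthogonal_to_span[of d B d] sp by auto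
  then show ?thesis unfolding d_def orthogonal_def by simp
qed



lemma spectral_sub:
  fixes A :: "real^'n^'n"
  assumes symA: "transpose A = A"
  shows "subspace S \<Longrightarrow> (\<forall>x\<in>S. A *v x \<in> S) \<Longrightarrow>
    \<exists>B. B \<subseteq> S \<and> pairwise orthogonal B \<and> (\<forall>u\<in>B. norm u = 1) \<and> span B = S \<and>
        (\<forall>u\<in>B. A *v u = (u \<bullet> (A *v u)) *\<^sub>R u)"
proof (induction "dim S" arbitrary: S rule: less_induct)
  case less
  note sub = less.prems(1) and inv = less.prems(2)
  show ?case
  proof (cases "S = {0}")
    case True
    then show ?thesis by (intro exI[of _ "{}"]) auto
  next
    case False
    then obtain z where zS: "z \<in> S" and z0: "z \<noteq> 0" using sub subspace_0 by blast
    define K where "K = S \<inter> sphere 0 1"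
    have cK: "compact K" unfolding K_def
      using closed_subspace[OF sub] by (intro closed_Int_compact) auto
    have "(1 / norm z) *\<^sub>R z \<in> K" unfolding K_def using zS z0 sub
      by (simp add: subspace_scale)
    then have neK: "K \<noteq> {}" by blast
    have contq: "continuous_on K (\<lambda>x. x \<bullet> (A *v x))"
      by (intro continuous_intros linear_continuous_on matrix_vector_mul_linear)
    obtain u where uK: "u \<in> K" and umax: "\<forall>y\<in>K. y \<bullet> (A *v y) \<le> u \<bullet> (A *v u)"
      using continuous_attains_sup[OF cK neK contq] by blast
    define \<mu> where "\<mu> = u \<bullet> (A *v u)"
    have uS: "u \<in> S" and nu: "norm u = 1" using uK unfolding K_def by auto
    have uu: "u \<bullet> u = 1" using nu by (simp add: dot_square_norm)
    have qmax: "x \<bullet> (A *v x) \<le> \<mu> * (x \<bullet> x)" if xS: "x \<in> S" for x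
    proof (cases "x = 0")
      case True then show ?thesis by simp
    next
      case False
      define y where "y = (1 / norm x) *\<^sub>R x"
      have "y \<in> K" unfolding K_def y_def using xS False sub by (simp add: subspace_scale)
      then have "y \<bullet> (A *v y) \<le> \<mu>" using umax \<mu>_def by auto
      moreover have "y \<bullet> (A *v y) = (x \<bullet> (A *v x)) / (x \<bullet> x)"
        unfolding y_def by (simp add: matrix_vector_mult_scaleR dot_square_norm power2_eq_square)
      moreover have "x \<bullet> x > 0" using False by simp
      ultimately show ?thesis by (simp add: divide_le_eq)
    qed
    define r where "r = A *v u - \<mu> *\<^sub>R u"
    have rS: "r \<in> S" unfolding r_def using inv uS sub
      by (simp add: subspace_diff subspace_scale)
    have ur: "u \<bullet> r = 0" unfolding r_def using uu \<mu>_def by (simp add: inner_diff_right)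
    have rAu: "r \<bullet> (A *v u) = r \<bullet> r"
    proof -
      have "A *v u = r + \<mu> *\<^sub>R u" unfolding r_def by simp
      then show ?thesis using ur by (simp add: inner_add_right inner_commute)
    qed
    have uAr: "u \<bullet> (A *v r) = r \<bullet> r"
      using sym_dot[OF symA, of u r] rAu by (simp add: inner_commute)
    have key: "2 * t * (r \<bullet> r) + t^2 * (r \<bullet> (A *v r)) \<le> \<mu> * t^2 * (r \<bullet> r)" for t
    proof -
      have "u + t *\<^sub>R r \<in> S" using uS rS sub by (simp add: subspace_add subspace_scale)
      then have h: "(u + t *\<^sub>R r) \<bullet> (A *v (u + t *\<^sub>R r)) \<le> \<mu> * ((u + t *\<^sub>R r) \<bullet> (u + t *\<^sub>R r))"
        by (rule qmax)
      have e1: "(u + t *\<^sub>R r) \<bullet> (A *v (u + t *\<^sub>R r)) = \<mu> + 2 * t * (r \<bullet> r) + t^2 * (r \<bullet> (A *v r))"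
        using rAu uAr \<mu>_def
        by (simp add: matrix_vector_right_distrib matrix_vector_mult_scaleR inner_add_left
            inner_add_right power2_eq_square algebra_simps)
      have e2: "(u + t *\<^sub>R r) \<bullet> (u + t *\<^sub>R r) = 1 + t^2 * (r \<bullet> r)"
        using ur uu by (simp add: inner_add_left inner_add_right inner_commute power2_eq_square algebra_simps)
      from h have "\<mu> + 2 * t * (r \<bullet> r) + t^2 * (r \<bullet> (A *v r)) \<le> \<mu> * (1 + t^2 * (r \<bullet> r))"
        by (simp only: e1 e2)
      then show ?thesis by (simp add: algebra_simps)
    qed
    have r0: "r = 0"
    proof (rule ccontr)
      assume "r \<noteq> 0"
      then have rr: "r \<bullet> r > 0" by simp
      define C where "C = \<mu> * (r \<bullet> r) - r \<bullet> (A *v r)"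
      define t where "t = (r \<bullet> r) / (\<bar>C\<bar> + 1)"
      have t0: "t > 0" unfolding t_def using rr by simp
      have "2 * t * (r \<bullet> r) \<le> t^2 * C" using key[of t] unfolding C_def by (simp add: algebra_simps)
      then have "2 * (r \<bullet> r) \<le> t * C" using t0 by (simp add: power2_eq_square)
      also have "t * C \<le> t * \<bar>C\<bar>" using t0 by (simp add: mult_left_mono)
      also have "t * \<bar>C\<bar> < r \<bullet> r" unfolding t_def using rr
        by (simp add: divide_less_eq algebra_simps)
      finally show False using rr by simp
    qed
    then have Au: "A *v u = \<mu> *\<^sub>R u" unfolding r_def by simp
    define S' where "S' = {y \<in> S. u \<bullet> y = 0}"
    have sub': "subspace S'" unfolding S'_def subspace_def using sub
      by (auto simp: subspace_0 subspace_add subspace_scale inner_add_right)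
    have inv': "\<forall>y\<in>S'. A *v y \<in> S'"
    proof
      fix y assume "y \<in> S'"
      then have "y \<in> S" "u \<bullet> y = 0" unfolding S'_def by auto
      moreover have "u \<bullet> (A *v y) = \<mu> * (u \<bullet> y)"
        using sym_dot[OF symA, of u y] Au by simp
      ultimately show "A *v y \<in> S'" unfolding S'_def using inv by auto
    qed
    have "S' \<subset> S" using uS uu unfolding S'_def by (metis (mono_tags, lifting) mem_Collect_eq psubsetI subsetI zero_neq_one)
    then have "span S' \<subset> span S" using span_eq_iff sub sub' by metis
    then have "dim S' < dim S" by (rule dim_psubset)
    from less.hyps[OF this sub' inv'] obtain B' where
      B': "B' \<subseteq> S'" "pairwise orthogonal B'" "\<forall>u\<in>B'. norm u = 1" "span B' = S'"
        "\<forall>u\<in>B'. A *v u = (u \<bullet> (A *v u)) *\<^sub>R u" by blast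
    show ?thesis
    proof (intro exI[of _ "insert u B'"] conjI)
      show "insert u B' \<subseteq> S" using B'(1) uS unfolding S'_def by auto
      show "pairwise orthogonal (insert u B')"
        using B'(1,2) unfolding pairwise_insert S'_def
        by (auto simp: orthogonal_def inner_commute)
      show "\<forall>v\<in>insert u B'. norm v = 1" using B'(3) nu by auto
      show "\<forall>v\<in>insert u B'. A *v v = (v \<bullet> (A *v v)) *\<^sub>R v"
        using B'(5) Au \<mu>_def by auto
      show "span (insert u B') = S"
      proof
        show "span (insert u B') \<subseteq> S"
          using B'(1) uS sub unfolding S'_def by (intro span_minimal) auto
        show "S \<subseteq> span (insert u B')"
        proof
          fix s assume sS: "s \<in> S"
          have "s - (u \<bullet> s) *\<^sub>R u \<in> S'" unfolding S'_def
            using sS uS sub uu by (simp add: subspace_diff subspace_scale inner_diff_right)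
          then have "s - (u \<bullet> s) *\<^sub>R u \<in> span B'" using B'(4) by simp
          then show "s \<in> span (insert u B')" using span_breakdown_eq by blast
        qed
      qed
    qed
  qed
qed



definition "spec_basis (A::real^'n^'n) B \<longleftrightarrow> finite B \<and> pairwise orthogonal B \<and> (\<forall>u\<in>B. norm u = 1)
   \<and> span B = UNIV \<and> (\<forall>u\<in>B. A *v u = (u \<bullet> (A *v u)) *\<^sub>R u) \<and> card B \<le> CARD('n) \<and> B \<noteq> {}"

lemma spectral:
  fixes A :: "real^'n^'n"
  assumes symA: "transpose A = A"
  obtains B where "spec_basis A B"
proof -
  obtain B where B: "pairwise orthogonal B" "\<forall>u\<in>B. norm u = 1" "span B = UNIV"
      "\<forall>u\<in>B. A *v u = (u \<bullet> (A *v u)) *\<^sub>R u"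
    using spectral_sub[OF symA, of UNIV] by auto
  have "0 \<notin> B" using B(2) by auto
  then have "independent B" using pairwise_orthogonal_independent B(1) by blast
  then have fc: "finite B" "card B \<le> CARD('n)" using independent_bound[of B] by auto
  have "B \<noteq> {}"
  proof
    assume "B = {}"
    then have "(axis undefined 1 :: real^'n) \<in> span {}" using B(3) by simp
    then show False by (simp add: axis_eq_0_iff)
  qed
  then show ?thesis using that B fc unfolding spec_basis_def by auto
qed

lemma eig_image:
  fixes A :: "real^'n^'n"
  assumes symA: "transpose A = A" and sb: "spec_basis A B"
  shows "mat_eigenvalues A = (\<lambda>u. u \<bullet> (A *v u)) ` B"
proof
  have fin: "finite B" and po: "pairwise orthogonal B" and n1: "\<forall>u\<in>B. norm u = 1"
    and spB: "span B = UNIV" and ev: "\<forall>u\<in>B. A *v u = (u \<bullet> (A *v u)) *\<^sub>R u"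
    using sb unfolding spec_basis_def by auto
  show "(\<lambda>u. u \<bullet> (A *v u)) ` B \<subseteq> mat_eigenvalues A"
  proof
    fix l assume "l \<in> (\<lambda>u. u \<bullet> (A *v u)) ` B"
    then obtain u where "u \<in> B" "l = u \<bullet> (A *v u)" by blast
    moreover have "u \<noteq> 0" using n1 \<open>u \<in> B\<close> by auto
    ultimately show "l \<in> mat_eigenvalues A" unfolding mat_eigenvalues_def using ev by blast
  qed
  show "mat_eigenvalues A \<subseteq> (\<lambda>u. u \<bullet> (A *v u)) ` B"
  proof
    fix l assume "l \<in> mat_eigenvalues A"
    then obtain v where v0: "v \<noteq> 0" and Av: "A *v v = l *\<^sub>R v" unfolding mat_eigenvalues_def by auto
    have "\<exists>u\<in>B. v \<bullet> u \<noteq> 0"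
    proof (rule ccontr)
      assume "\<not> ?thesis"
      then have "v = (\<Sum>u\<in>B. (v \<bullet> u) *\<^sub>R u)" "(\<Sum>u\<in>B. (v \<bullet> u) *\<^sub>R u) = 0"
        using ortho_expand[OF fin po n1 spB, of v] by auto
      then show False using v0 by simp
    qed
    then obtain u where uB: "u \<in> B" and vu: "v \<bullet> u \<noteq> 0" by blast
    have "l * (v \<bullet> u) = (A *v v) \<bullet> u" using Av by simp
    also have "\<dots> = v \<bullet> (A *v u)" by (rule sym_dot[OF symA])
    also have "\<dots> = (u \<bullet> (A *v u)) * (v \<bullet> u)" using ev uB by (metis inner_scaleR_right)
    finally have "l = u \<bullet> (A *v u)" using vu by simp
    then show "l \<in> (\<lambda>u. u \<bullet> (A *v u)) ` B" using uB by blast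
  qed
qed

lemma eig_facts:
  fixes A :: "real^'n^'n"
  assumes symA: "transpose A = A"
  shows "finite (mat_eigenvalues A)" "mat_eigenvalues A \<noteq> {}" "card (mat_eigenvalues A) \<le> CARD('n)"
proof -
  obtain B where sb: "spec_basis A B" using spectral[OF symA] by blast
  have e: "mat_eigenvalues A = (\<lambda>u. u \<bullet> (A *v u)) ` B" by (rule eig_image[OF symA sb])
  have "finite B" "B \<noteq> {}" "card B \<le> CARD('n)" using sb unfolding spec_basis_def by auto
  then show "finite (mat_eigenvalues A)" "mat_eigenvalues A \<noteq> {}" "card (mat_eigenvalues A) \<le> CARD('n)"
    unfolding e using card_image_le[of B "\<lambda>u. u \<bullet> (A *v u)"] by auto
qed

lemma transpose_shift:
  fixes H :: "real^'n^'n"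
  assumes "transpose H = H"
  shows "transpose (H + c *\<^sub>R mat 1) = H + c *\<^sub>R mat 1"
  using assms by (simp add: vec_eq_iff transpose_def mat_def)

lemma eig_shift:
  fixes H :: "real^'n^'n"
  shows "mat_eigenvalues (H + c *\<^sub>R mat 1) = (\<lambda>l. l + c) ` mat_eigenvalues H"
proof -
  have e: "(H + c *\<^sub>R mat 1) *v v = H *v v + c *\<^sub>R v" for v
    by (simp add: matrix_vector_mult_add_rdistrib scaleR_matrix_vector_assoc[symmetric])
  show ?thesis unfolding mat_eigenvalues_def e
  proof (auto simp: image_iff)
    fix v :: "real^'n" and l assume "v \<noteq> 0" "H *v v + c *\<^sub>R v = l *\<^sub>R v"
    then show "\<exists>x. (\<exists>v. v \<noteq> 0 \<and> H *v v = x *\<^sub>R v) \<and> l = x + c"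
      by (intro exI[of _ "l - c"]) (auto simp: algebra_simps)
  next
    fix l v assume "(v::real^'n) \<noteq> 0" "H *v v = l *\<^sub>R v"
    then show "\<exists>v. v \<noteq> 0 \<and> H *v v + c *\<^sub>R v = (l + c) *\<^sub>R v"
      by (intro exI[of _ v]) (auto simp: algebra_simps)
  qed
qed

lemma orth_proj_eq:
  fixes C :: "'a::real_inner set"
  assumes "p \<in> span C" and "\<forall>c\<in>C. inner (y - p) c = 0"
  shows "orth_proj (span C) y = p"
  unfolding orth_proj_def
proof (rule the_equality)
  have "\<forall>s\<in>span C. orthogonal (y - p) s"
    using assms(2) orthogonal_to_span[of _ C "y - p"] by (auto simp: orthogonal_def)
  then show "p \<in> span C \<and> (\<forall>s\<in>span C. inner (y - p) s = 0)" using assms(1) by (auto simp: orthogonal_def)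
  fix q assume q: "q \<in> span C \<and> (\<forall>s\<in>span C. inner (y - q) s = 0)"
  have "p - q \<in> span C" using q assms(1) by (simp add: span_diff)
  then have "inner (y - q) (p - q) = 0" "inner (y - p) (p - q) = 0"
    using q \<open>\<forall>s\<in>span C. orthogonal (y - p) s\<close> by (auto simp: orthogonal_def)
  then have "inner (p - q) (p - q) = 0" by (simp add: inner_diff_left inner_diff_right algebra_simps)
  then show "q = p" by simp
qed



lemma proj_formula:
  fixes A :: "real^'n^'n"
  assumes symA: "transpose A = A" and sb: "spec_basis A B"
  shows "orth_proj (span {v. \<exists>l. R l \<and> A *v v = l *\<^sub>R v}) y =
     (\<Sum>u\<in>B. (if R (u \<bullet> (A *v u)) then y \<bullet> u else 0) *\<^sub>R u)"
proof (rule orth_proj_eq)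
  have fin: "finite B" and po: "pairwise orthogonal B" and n1: "\<forall>u\<in>B. norm u = 1"
    and spB: "span B = UNIV" and ev: "\<forall>u\<in>B. A *v u = (u \<bullet> (A *v u)) *\<^sub>R u"
    using sb unfolding spec_basis_def by auto
  let ?C = "{v. \<exists>l. R l \<and> A *v v = l *\<^sub>R v}"
  let ?p = "(\<Sum>u\<in>B. (if R (u \<bullet> (A *v u)) then y \<bullet> u else 0) *\<^sub>R u)"
  show "?p \<in> span ?C"
  proof (rule span_sum)
    fix u assume uB: "u \<in> B"
    show "(if R (u \<bullet> (A *v u)) then y \<bullet> u else 0) *\<^sub>R u \<in> span ?C"
    proof (cases "R (u \<bullet> (A *v u))")
      case True
      then have "u \<in> ?C" using ev uB by blast
      then show ?thesis by (simp add: span_base span_scale)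
    qed (simp add: span_zero)
  qed
  show "\<forall>c\<in>?C. (y - ?p) \<bullet> c = 0"
  proof
    fix c assume "c \<in> ?C"
    then obtain l where Rl: "R l" and Ac: "A *v c = l *\<^sub>R c" by blast
    have cu: "c \<bullet> u = 0" if uB: "u \<in> B" and nR: "\<not> R (u \<bullet> (A *v u))" for u
    proof -
      have "l * (c \<bullet> u) = (A *v c) \<bullet> u" using Ac by simp
      also have "\<dots> = c \<bullet> (A *v u)" by (rule sym_dot[OF symA])
      also have "\<dots> = (u \<bullet> (A *v u)) * (c \<bullet> u)" using ev uB by (metis inner_scaleR_right)
      finally have "(l - u \<bullet> (A *v u)) * (c \<bullet> u) = 0" by (simp add: algebra_simps)
      moreover have "l \<noteq> u \<bullet> (A *v u)" using Rl nR by auto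
      ultimately show ?thesis by simp
    qed
    have yp: "(y - ?p) \<bullet> u = (if R (u \<bullet> (A *v u)) then 0 else y \<bullet> u)" if "u \<in> B" for u
      using ortho_coeff[OF fin po n1 that] by (simp add: inner_diff_left)
    have "(y - ?p) \<bullet> c = (y - ?p) \<bullet> (\<Sum>u\<in>B. (c \<bullet> u) *\<^sub>R u)"
      using ortho_expand[OF fin po n1 spB, of c] by simp
    also have "\<dots> = (\<Sum>u\<in>B. (c \<bullet> u) * ((y - ?p) \<bullet> u))" by (simp add: inner_sum_right)
    also have "\<dots> = 0" using yp cu by (intro sum.neutral) auto
    finally show "(y - ?p) \<bullet> c = 0" .
  qed
qed

lemma term_ineqs:
  fixes a m0 M0 \<mu> :: real
  assumes a: "a \<ge> 0" and m0: "0 < m0" "m0 \<le> \<mu>" "\<mu> \<le> M0"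
  shows "a / M0^2 \<le> a / \<mu>^2" "a / \<mu>^2 \<le> a / m0^2" "a / M0 \<le> a / \<mu>" "a / \<mu> \<le> a / m0"
    "m0 * (a / \<mu>^2) \<le> a / \<mu>" "a / \<mu> \<le> M0 * (a / \<mu>^2)"
proof -
  have mu: "\<mu> > 0" using m0 by simp
  have M: "M0 > 0" using m0 by simp
  show "a / M0^2 \<le> a / \<mu>^2" using a mu m0 by (intro divide_left_mono power_mono) auto
  show "a / \<mu>^2 \<le> a / m0^2" using a mu m0 by (intro divide_left_mono power_mono) auto
  show "a / M0 \<le> a / \<mu>" using a mu m0 by (intro divide_left_mono) auto
  show "a / \<mu> \<le> a / m0" using a mu m0 by (intro divide_left_mono) auto
  have "m0 * (a / \<mu>^2) = (m0 / \<mu>) * (a / \<mu>)" by (simp add: power2_eq_square)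
  also have "\<dots> \<le> 1 * (a / \<mu>)" using a mu m0 by (intro mult_right_mono) auto
  finally show "m0 * (a / \<mu>^2) \<le> a / \<mu>" by simp
  have "a / \<mu> = 1 * (a / \<mu>)" by simp
  also have "\<dots> \<le> (M0 / \<mu>) * (a / \<mu>)" using a mu m0 by (intro mult_right_mono) auto
  also have "\<dots> = M0 * (a / \<mu>^2)" by (simp add: power2_eq_square)
  finally show "a / \<mu> \<le> M0 * (a / \<mu>^2)" .
qed



lemma main_bounds:
  fixes A :: "real^'n^'n" and g :: "real^'n"
  assumes symA: "transpose A = A" and mpos: "minsp A > 0"
  defines "v \<equiv> matrix_inv A *v g"
  defines "w \<equiv> pr_pos A v - pr_neg A v"
  shows "(norm g / sp A \<le> norm w \<and> norm w \<le> norm g / minsp A)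
         \<and> (norm g ^ 2 / sp A \<le> w \<bullet> g \<and> w \<bullet> g \<le> norm g ^ 2 / minsp A
            \<and> minsp A * norm w ^ 2 \<le> w \<bullet> g \<and> w \<bullet> g \<le> sp A * norm w ^ 2) \<and> sp A > 0"
proof -
  obtain B where sb: "spec_basis A B" using spectral[OF symA] by blast
  have fin: "finite B" and po: "pairwise orthogonal B" and n1: "\<forall>u\<in>B. norm u = 1"
    and spB: "span B = UNIV" and ev: "\<forall>u\<in>B. A *v u = (u \<bullet> (A *v u)) *\<^sub>R u" and Bne: "B \<noteq> {}"
    using sb unfolding spec_basis_def by auto
  define ev_of where "ev_of u = u \<bullet> (A *v u)" for u
  have eig: "mat_eigenvalues A = ev_of ` B" unfolding ev_of_def by (rule eig_image[OF symA sb])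
  have feig: "finite (abs ` mat_eigenvalues A)" using fin eig by simp
  have lb: "minsp A \<le> \<bar>ev_of u\<bar>" and ub: "\<bar>ev_of u\<bar> \<le> sp A" if "u \<in> B" for u
    unfolding minsp_def sp_def using feig that eig by (auto intro: Min_le Max_ge)
  have lnz: "ev_of u \<noteq> 0" if "u \<in> B" for u using lb[OF that] mpos by auto
  obtain u0 where u0: "u0 \<in> B" using Bne by blast
  have spos: "sp A > 0" using lb[OF u0] ub[OF u0] mpos by simp
  have ker: "x = 0" if Ax: "A *v x = 0" for x
  proof -
    have "x \<bullet> u = 0" if uB: "u \<in> B" for u
    proof -
      have "0 = (A *v x) \<bullet> u" using Ax by simp
      also have "\<dots> = x \<bullet> (A *v u)" by (rule sym_dot[OF symA])
      also have "\<dots> = ev_of u * (x \<bullet> u)" using ev uB unfolding ev_of_def by (metis inner_scaleR_right)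
      finally show ?thesis using lnz[OF uB] by simp
    qed
    then show ?thesis using ortho_expand[OF fin po n1 spB, of x] by simp
  qed
  then obtain B' where "B' ** A = mat 1" using matrix_left_invertible_ker by blast
  then have "A ** B' = mat 1" using matrix_left_right_inverse by blast
  then have "\<exists>A'. A ** A' = mat 1 \<and> A' ** A = mat 1" using \<open>B' ** A = mat 1\<close> by blast
  then have "A ** matrix_inv A = mat 1" unfolding matrix_inv_def by (rule someI_ex[THEN conjunct1])
  then have Av: "A *v v = g" unfolding v_def by (simp add: matrix_vector_mul_assoc)
  have gu: "g \<bullet> u = ev_of u * (v \<bullet> u)" if uB: "u \<in> B" for u
  proof -
    have "g \<bullet> u = (A *v v) \<bullet> u" using Av by simp
    also have "\<dots> = v \<bullet> (A *v u)" by (rule sym_dot[OF symA])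
    also have "\<dots> = ev_of u * (v \<bullet> u)" using ev uB unfolding ev_of_def by (metis inner_scaleR_right)
    finally show ?thesis .
  qed
  define c where "c u = (g \<bullet> u) / \<bar>ev_of u\<bar>" for u
  have pp: "pr_pos A v = (\<Sum>u\<in>B. (if 0 < ev_of u then v \<bullet> u else 0) *\<^sub>R u)"
    unfolding pr_pos_def ev_of_def using proj_formula[OF symA sb, of "\<lambda>l. 0 < l" v] by simp
  have pn: "pr_neg A v = (\<Sum>u\<in>B. (if ev_of u < 0 then v \<bullet> u else 0) *\<^sub>R u)"
    unfolding pr_neg_def ev_of_def using proj_formula[OF symA sb, of "\<lambda>l. l < 0" v] by simp
  have wB: "w = (\<Sum>u\<in>B. c u *\<^sub>R u)"
  proof -
    have "w = (\<Sum>u\<in>B. (if 0 < ev_of u then v \<bullet> u else 0) *\<^sub>R u - (if ev_of u < 0 then v \<bullet> u else 0) *\<^sub>R u)"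
      unfolding w_def pp pn by (simp add: sum_subtractf)
    also have "\<dots> = (\<Sum>u\<in>B. c u *\<^sub>R u)"
    proof (rule sum.cong)
      fix u assume uB: "u \<in> B"
      have "v \<bullet> u = (g \<bullet> u) / ev_of u" using gu[OF uB] lnz[OF uB] by simp
      then show "(if 0 < ev_of u then v \<bullet> u else 0) *\<^sub>R u - (if ev_of u < 0 then v \<bullet> u else 0) *\<^sub>R u = c u *\<^sub>R u"
      proof (cases "0 < ev_of u")
        case True
        then show ?thesis unfolding c_def using \<open>v \<bullet> u = (g \<bullet> u) / ev_of u\<close> by simp
      next
        case False
        then have n: "ev_of u < 0" using lnz[OF uB] by simp
        then have "\<bar>ev_of u\<bar> = - ev_of u" by simp
        then have "c u = - (v \<bullet> u)" unfolding c_def using \<open>v \<bullet> u = (g \<bullet> u) / ev_of u\<close> by simp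
        then show ?thesis using n by simp
      qed
    qed simp
    finally show ?thesis .
  qed
  have gB: "g = (\<Sum>u\<in>B. (g \<bullet> u) *\<^sub>R u)" by (rule ortho_expand[OF fin po n1 spB])
  define a where "a u = (g \<bullet> u)^2" for u
  have a0: "a u \<ge> 0" for u unfolding a_def by simp
  have ww: "norm w ^ 2 = (\<Sum>u\<in>B. a u / \<bar>ev_of u\<bar>^2)"
  proof -
    have "norm w ^ 2 = w \<bullet> w" by (simp add: dot_square_norm)
    also have "\<dots> = (\<Sum>u\<in>B. c u * c u)" unfolding wB by (rule parseval[OF fin po n1])
    finally show ?thesis unfolding c_def a_def by (simp add: power2_eq_square)
  qed
  have wg: "w \<bullet> g = (\<Sum>u\<in>B. a u / \<bar>ev_of u\<bar>)"
  proof -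
    have "w \<bullet> g = (\<Sum>u\<in>B. c u * (g \<bullet> u))"
      unfolding wB by (subst gB) (rule parseval[OF fin po n1])
    then show ?thesis unfolding c_def a_def by (simp add: power2_eq_square)
  qed
  have gg: "norm g ^ 2 = (\<Sum>u\<in>B. a u)"
  proof -
    have "norm g ^ 2 = g \<bullet> g" by (simp add: dot_square_norm)
    also have "\<dots> = (\<Sum>u\<in>B. (g \<bullet> u) * (g \<bullet> u))" by (subst (1 2) gB) (rule parseval[OF fin po n1])
    finally show ?thesis unfolding a_def by (simp add: power2_eq_square)
  qed
  note T = term_ineqs[OF a0 mpos lb ub]
  have i1: "norm g ^ 2 / sp A ^ 2 \<le> norm w ^ 2"
    unfolding gg ww sum_divide_distrib by (intro sum_mono T(1))
  have i2: "norm w ^ 2 \<le> norm g ^ 2 / minsp A ^ 2"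
    unfolding gg ww sum_divide_distrib by (intro sum_mono T(2))
  have i3: "norm g ^ 2 / sp A \<le> w \<bullet> g"
    unfolding gg wg sum_divide_distrib by (intro sum_mono T(3))
  have i4: "w \<bullet> g \<le> norm g ^ 2 / minsp A"
    unfolding gg wg sum_divide_distrib by (intro sum_mono T(4))
  have i5: "minsp A * norm w ^ 2 \<le> w \<bullet> g"
    unfolding ww wg sum_distrib_left by (intro sum_mono T(5))
  have i6: "w \<bullet> g \<le> sp A * norm w ^ 2"
    unfolding ww wg sum_distrib_left by (intro sum_mono T(6))
  have "(norm g / sp A)^2 \<le> (norm w)^2" using i1 by (simp add: power_divide)
  then have j1: "norm g / sp A \<le> norm w" by (rule power2_le_imp_le) simp
  have "(norm w)^2 \<le> (norm g / minsp A)^2" using i2 by (simp add: power_divide)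
  then have j2: "norm w \<le> norm g / minsp A" by (rule power2_le_imp_le) (use mpos in simp)
  show ?thesis by (intro conjI j1 j2 i3 i4 i5 i6 spos)
qed



lemma line_deriv:
  fixes f :: "real^'m \<Rightarrow> real" and Df :: "real^'m \<Rightarrow> real^'m"
  assumes grad: "\<And>y. (f has_derivative (\<lambda>h. Df y \<bullet> h)) (at y)"
  shows "((\<lambda>\<sigma>. f (p + \<sigma> *\<^sub>R h)) has_real_derivative (Df (p + \<sigma> *\<^sub>R h) \<bullet> h)) (at \<sigma>)"
proof -
  have l: "((\<lambda>\<sigma>. p + \<sigma> *\<^sub>R h) has_derivative (\<lambda>d. d *\<^sub>R h)) (at \<sigma>)"
    by (auto intro!: derivative_eq_intros)
  have "((\<lambda>\<sigma>. f (p + \<sigma> *\<^sub>R h)) has_derivative (\<lambda>d. Df (p + \<sigma> *\<^sub>R h) \<bullet> (d *\<^sub>R h))) (at \<sigma>)"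
    using has_derivative_compose[OF l grad] .
  then show ?thesis unfolding has_field_derivative_def
    by (rule has_derivative_eq_rhs) (auto simp: fun_eq_iff)
qed

lemma line_deriv2:
  fixes Df :: "real^'m \<Rightarrow> real^'m" and D2f :: "real^'m \<Rightarrow> real^'m^'m"
  assumes hess: "\<And>y. (Df has_derivative (\<lambda>h. D2f y *v h)) (at y)"
  shows "((\<lambda>r. Df (p + r *\<^sub>R k) \<bullet> h) has_real_derivative ((D2f (p + r *\<^sub>R k) *v k) \<bullet> h)) (at r)"
proof -
  have l: "((\<lambda>\<sigma>. p + \<sigma> *\<^sub>R k) has_derivative (\<lambda>d. d *\<^sub>R k)) (at r)"
    by (auto intro!: derivative_eq_intros)
  have "((\<lambda>r. Df (p + r *\<^sub>R k)) has_derivative (\<lambda>d. D2f (p + r *\<^sub>R k) *v (d *\<^sub>R k))) (at r)"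
    using has_derivative_compose[OF l hess] .
  then have "((\<lambda>r. Df (p + r *\<^sub>R k) \<bullet> h) has_derivative (\<lambda>d. (D2f (p + r *\<^sub>R k) *v (d *\<^sub>R k)) \<bullet> h)) (at r)"
    by (rule has_derivative_inner_left)
  then show ?thesis unfolding has_field_derivative_def
    by (rule has_derivative_eq_rhs) (auto simp: fun_eq_iff matrix_vector_mult_scaleR)
qed

lemma second_diff:
  fixes f :: "real^'m \<Rightarrow> real" and Df :: "real^'m \<Rightarrow> real^'m" and D2f :: "real^'m \<Rightarrow> real^'m^'m"
  assumes grad: "\<And>y. (f has_derivative (\<lambda>h. Df y \<bullet> h)) (at y)"
    and hess: "\<And>y. (Df has_derivative (\<lambda>h. D2f y *v h)) (at y)"
  shows "\<exists>\<xi>. norm (\<xi> - x) \<le> norm h + norm k \<and>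
     f (x + h + k) - f (x + h) - f (x + k) + f x = (D2f \<xi> *v k) \<bullet> h"
proof -
  define G where "G \<sigma> = f ((x + k) + \<sigma> *\<^sub>R h) - f (x + \<sigma> *\<^sub>R h)" for \<sigma>
  have dG: "(G has_real_derivative (Df ((x + k) + \<sigma> *\<^sub>R h) \<bullet> h - Df (x + \<sigma> *\<^sub>R h) \<bullet> h)) (at \<sigma>)" for \<sigma>
    unfolding G_def by (intro DERIV_diff line_deriv[OF grad])
  obtain \<sigma> where \<sigma>: "0 < \<sigma>" "\<sigma> < 1" and
    e1: "G 1 - G 0 = (1 - 0) * (Df ((x + k) + \<sigma> *\<^sub>R h) \<bullet> h - Df (x + \<sigma> *\<^sub>R h) \<bullet> h)"
    using MVT2[of 0 1 G, OF _ dG] by auto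
  define p where "p = x + \<sigma> *\<^sub>R h"
  define \<psi> where "\<psi> r = Df (p + r *\<^sub>R k) \<bullet> h" for r
  have d\<psi>: "(\<psi> has_real_derivative ((D2f (p + r *\<^sub>R k) *v k) \<bullet> h)) (at r)" for r
    unfolding \<psi>_def by (rule line_deriv2[OF hess])
  obtain r where r: "0 < r" "r < 1" and e2: "\<psi> 1 - \<psi> 0 = (1 - 0) * ((D2f (p + r *\<^sub>R k) *v k) \<bullet> h)"
    using MVT2[of 0 1 \<psi>, OF _ d\<psi>] by auto
  have "f (x + h + k) - f (x + h) - f (x + k) + f x = G 1 - G 0"
    unfolding G_def by (simp add: algebra_simps)
  also have "\<dots> = \<psi> 1 - \<psi> 0" using e1 unfolding \<psi>_def p_def by (simp add: algebra_simps)
  also have "\<dots> = (D2f (p + r *\<^sub>R k) *v k) \<bullet> h" using e2 by simp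
  finally have eq: "f (x + h + k) - f (x + h) - f (x + k) + f x = (D2f (p + r *\<^sub>R k) *v k) \<bullet> h" .
  have "norm ((p + r *\<^sub>R k) - x) \<le> norm (\<sigma> *\<^sub>R h) + norm (r *\<^sub>R k)"
    unfolding p_def using norm_triangle_ineq[of "\<sigma> *\<^sub>R h" "r *\<^sub>R k"] by (simp add: algebra_simps)
  also have "\<dots> \<le> norm h + norm k" using \<sigma> r
    by (intro add_mono) (auto intro: mult_left_le_one_le)
  finally show ?thesis using eq by blast
qed

lemma hess_sym:
  fixes f :: "real^'m \<Rightarrow> real" and Df :: "real^'m \<Rightarrow> real^'m" and D2f :: "real^'m \<Rightarrow> real^'m^'m"
  assumes grad: "\<And>y. (f has_derivative (\<lambda>h. Df y \<bullet> h)) (at y)"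
    and hess: "\<And>y. (Df has_derivative (\<lambda>h. D2f y *v h)) (at y)"
    and hess_cont: "continuous_on UNIV D2f"
  shows "transpose (D2f x) = D2f x"
proof -
  have entry: "(M *v (s *\<^sub>R axis j 1)) \<bullet> (s *\<^sub>R axis i 1) = s^2 * M $ i $ j" for M :: "real^'m^'m" and s i j
    by (simp add: matrix_vector_mult_scaleR matrix_vector_mult_basis inner_axis column_def power2_eq_square)
  have compn: "\<bar>N $ i $ j\<bar> \<le> norm N" for N :: "real^'m^'m" and i j
    using component_le_norm_cart[where x="N $ i" and i=j] Finite_Cartesian_Product.norm_nth_le[where x=N and i=i] by linarith
  have "D2f x $ i $ j = D2f x $ j $ i" for i j
  proof (rule ccontr)
    define a where "a = D2f x $ i $ j - D2f x $ j $ i"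
    assume "D2f x $ i $ j \<noteq> D2f x $ j $ i"
    then have a0: "\<bar>a\<bar> > 0" unfolding a_def by simp
    obtain d where d: "d > 0" and dc: "\<And>y. dist y x < d \<Longrightarrow> dist (D2f y) (D2f x) < \<bar>a\<bar> / 2"
      using hess_cont a0 unfolding continuous_on_iff by (metis UNIV_I half_gt_zero)
    define s where "s = d / 4"
    have s0: "s > 0" unfolding s_def using d by simp
    define h where "h = s *\<^sub>R (axis i 1 :: real^'m)"
    define k where "k = s *\<^sub>R (axis j 1 :: real^'m)"
    have nh: "norm h = s" "norm k = s" unfolding h_def k_def using s0 by auto
    obtain \<xi>1 where x1: "norm (\<xi>1 - x) \<le> norm h + norm k"
      and e1: "f (x + h + k) - f (x + h) - f (x + k) + f x = (D2f \<xi>1 *v k) \<bullet> h"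
      using second_diff[OF grad hess, of x h k] by blast
    obtain \<xi>2 where x2: "norm (\<xi>2 - x) \<le> norm k + norm h"
      and e2: "f (x + k + h) - f (x + k) - f (x + h) + f x = (D2f \<xi>2 *v h) \<bullet> k"
      using second_diff[OF grad hess, of x k h] by blast
    have "x + k + h = x + h + k" by (simp add: algebra_simps)
    then have "f (x + k + h) = f (x + h + k)" by (rule arg_cong[where f=f])
    then have "(D2f \<xi>1 *v k) \<bullet> h = (D2f \<xi>2 *v h) \<bullet> k" using e1 e2 by linarith
    then have "s^2 * D2f \<xi>1 $ i $ j = s^2 * D2f \<xi>2 $ j $ i" unfolding h_def k_def entry .
    then have eqx: "D2f \<xi>1 $ i $ j = D2f \<xi>2 $ j $ i" using s0 by simp
    have "dist \<xi>1 x < d" "dist \<xi>2 x < d" using x1 x2 nh d unfolding s_def dist_norm by auto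
    then have "norm (D2f \<xi>1 - D2f x) < \<bar>a\<bar> / 2" "norm (D2f \<xi>2 - D2f x) < \<bar>a\<bar> / 2"
      using dc by (auto simp: dist_norm)
    then have "\<bar>D2f \<xi>1 $ i $ j - D2f x $ i $ j\<bar> < \<bar>a\<bar> / 2" "\<bar>D2f \<xi>2 $ j $ i - D2f x $ j $ i\<bar> < \<bar>a\<bar> / 2"
      using compn[of "D2f \<xi>1 - D2f x" i j] compn[of "D2f \<xi>2 - D2f x" j i] by auto
    moreover have "\<And>p q r :: real. \<bar>p - q\<bar> < \<bar>q - r\<bar> / 2 \<Longrightarrow> \<bar>p - r\<bar> < \<bar>q - r\<bar> / 2 \<Longrightarrow> False"
      by (auto simp: abs_if split: if_splits)
    ultimately show False using eqx unfolding a_def by metis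
  qed
  then show ?thesis by (simp add: vec_eq_iff transpose_def)
qed



theorem lemma1:
  fixes f :: "real^'m \<Rightarrow> real"
    and Df :: "real^'m \<Rightarrow> real^'m"
    and D2f :: "real^'m \<Rightarrow> real^'m^'m"
    and \<delta> :: "nat \<Rightarrow> real"
    and \<tau> :: real
    and x :: "real^'m"
  assumes grad: "\<And>y. (f has_derivative (\<lambda>h. Df y \<bullet> h)) (at y)"
    and hess: "\<And>y. (Df has_derivative (\<lambda>h. D2f y *v h)) (at y)"
    and hess_cont: "continuous_on UNIV D2f"
    and distinct: "inj_on \<delta> {0..CARD('m)}"
    and tau: "\<tau> > 0"
    and nz: "Df x \<noteq> 0"
  shows "let A = A_mat \<delta> \<tau> (D2f x) (Df x); w = w_vec \<delta> \<tau> (D2f x) (Df x); g = Df x in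
           (norm g / sp A \<le> norm w \<and> norm w \<le> norm g / minsp A)
         \<and> (norm g ^ 2 / sp A \<le> w \<bullet> g \<and> w \<bullet> g \<le> norm g ^ 2 / minsp A
            \<and> minsp A * norm w ^ 2 \<le> w \<bullet> g \<and> w \<bullet> g \<le> sp A * norm w ^ 2)
         \<and> (\<exists>\<gamma>b>0. \<forall>\<gamma>. 0 < \<gamma> \<and> \<gamma> < \<gamma>b \<longrightarrow>
               f (x - \<gamma> *\<^sub>R w) - f x \<le> - \<gamma> * (w \<bullet> g) / 3)"
proof -
  define H where "H = D2f x"
  define g where "g = Df x"
  define m where "m = CARD('m)"
  define t where "t = norm g powr \<tau>"
  define \<kappa> where "\<kappa> = kappa \<delta> m"
  have symH: "transpose H = H" unfolding H_def by (rule hess_sym[OF grad hess hess_cont])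
  have gpos: "norm g > 0" using nz unfolding g_def by simp
  have t0: "t > 0" unfolding t_def using gpos by simp
  have m1: "m \<ge> 1" unfolding m_def by (simp add: Suc_le_eq)
  define D where "D = {\<bar>\<delta> i - \<delta> j\<bar> | i j. i \<le> m \<and> j \<le> m \<and> i \<noteq> j}"
  have Dsub: "D \<subseteq> (\<lambda>(i, j). \<bar>\<delta> i - \<delta> j\<bar>) ` ({0..m} \<times> {0..m})" unfolding D_def by force
  have finD: "finite D" using finite_subset[OF Dsub] by auto
  have "\<bar>\<delta> 0 - \<delta> 1\<bar> \<in> D" unfolding D_def using m1 by force
  then have neD: "D \<noteq> {}" by blast
  have posD: "\<forall>d\<in>D. d > 0" unfolding D_def using distinct unfolding m_def[symmetric]
    by (auto simp: inj_on_def)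
  have \<kappa>_eq: "\<kappa> = Min D / 2" unfolding \<kappa>_def kappa_def D_def by simp
  have \<kappa>0: "\<kappa> > 0" unfolding \<kappa>_eq using finD neD posD by simp
  have \<kappa>le: "2 * \<kappa> \<le> \<bar>\<delta> i - \<delta> j\<bar>" if "i \<le> m" "j \<le> m" "i \<noteq> j" for i j
  proof -
    have "\<bar>\<delta> i - \<delta> j\<bar> \<in> D" unfolding D_def using that by blast
    then show ?thesis unfolding \<kappa>_eq using finD by simp
  qed
  define E where "E = mat_eigenvalues H"
  have finE: "finite E" and neE: "E \<noteq> {}" and cardE: "card E \<le> m"
    using eig_facts[OF symH] unfolding E_def m_def by auto
  define P where "P j \<longleftrightarrow> kappa \<delta> CARD('m) * norm (Df x) powr \<tau> \<le> minsp (D2f x + (\<delta> j * norm (Df x) powr \<tau>) *\<^sub>R mat 1)" for j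
  have Pj: "P j \<longleftrightarrow> \<kappa> * t \<le> Min ((\<lambda>l. \<bar>l + \<delta> j * t\<bar>) ` E)" for j
    unfolding P_def minsp_def eig_shift \<kappa>_def m_def t_def g_def H_def E_def by (simp add: image_image)
  have exP: "\<exists>j. j \<le> m \<and> P j"
  proof (rule ccontr)
    assume "\<not> ?thesis"
    have "\<forall>j\<in>{0..m}. \<exists>l. l \<in> E \<and> \<bar>l + \<delta> j * t\<bar> < \<kappa> * t"
    proof
      fix j assume "j \<in> {0..m}"
      then have "\<not> P j" using \<open>\<not> (\<exists>j. j \<le> m \<and> P j)\<close> by auto
      then show "\<exists>l. l \<in> E \<and> \<bar>l + \<delta> j * t\<bar> < \<kappa> * t"
        unfolding Pj using finE neE by (auto simp: not_le Min_less_iff)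
    qed
    then obtain \<phi> where \<phi>: "\<forall>j\<in>{0..m}. \<phi> j \<in> E \<and> \<bar>\<phi> j + \<delta> j * t\<bar> < \<kappa> * t"
      using bchoice by metis
    have "inj_on \<phi> {0..m}"
    proof (rule inj_onI, rule ccontr)
      fix i j assume ij: "i \<in> {0..m}" "j \<in> {0..m}" "\<phi> i = \<phi> j" "i \<noteq> j"
      have "\<bar>\<delta> i - \<delta> j\<bar> * t = \<bar>(\<phi> j + \<delta> i * t) - (\<phi> j + \<delta> j * t)\<bar>"
        using t0 by (simp add: abs_mult left_diff_distrib[symmetric])
      also have "\<dots> \<le> \<bar>\<phi> i + \<delta> i * t\<bar> + \<bar>\<phi> j + \<delta> j * t\<bar>" using ij(3) by (simp add: abs_triangle_ineq4)
      also have "\<dots> < 2 * \<kappa> * t"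
      proof -
        have "\<bar>\<phi> i + \<delta> i * t\<bar> < \<kappa> * t" "\<bar>\<phi> j + \<delta> j * t\<bar> < \<kappa> * t"
          using \<phi> ij(1,2) by auto
        then show ?thesis by linarith
      qed
      finally have "\<bar>\<delta> i - \<delta> j\<bar> < 2 * \<kappa>" using t0 by simp
      then show False using \<kappa>le[of i j] ij by auto
    qed
    then have "card {0..m} \<le> card E" using \<phi> finE by (intro card_inj_on_le) auto
    then show False using cardE by simp
  qed
  define J where "J = (LEAST j. j \<le> m \<and> P j)"
  have PJ: "P J" unfolding J_def using LeastI_ex[OF exP] by blast
  have ds: "delta_sel \<delta> \<tau> H g = \<delta> J"
    unfolding delta_sel_def J_def P_def m_def H_def g_def ..
  define A where "A = A_mat \<delta> \<tau> H g"
  have Aeq: "A = H + (\<delta> J * t) *\<^sub>R mat 1" unfolding A_def A_mat_def ds t_def ..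
  have symA: "transpose A = A" unfolding Aeq by (rule transpose_shift[OF symH])
  have "\<kappa> * t \<le> minsp A" using PJ unfolding P_def Aeq \<kappa>_def m_def t_def g_def H_def .
  then have mpos: "minsp A > 0" using \<kappa>0 t0 by (smt (verit) mult_pos_pos)
  define w where "w = w_vec \<delta> \<tau> H g"
  have weq: "w = pr_pos A (matrix_inv A *v g) - pr_neg A (matrix_inv A *v g)"
    unfolding w_def w_vec_def v_vec_def A_def ..
  note MB = main_bounds[OF symA mpos, of g, folded weq]
  have wg0: "w \<bullet> g > 0"
  proof -
    have "norm g ^ 2 / sp A > 0" using gpos MB by simp
    then show ?thesis using MB by linarith
  qed
  have part3: "\<exists>\<gamma>b>0. \<forall>\<gamma>. 0 < \<gamma> \<and> \<gamma> < \<gamma>b \<longrightarrow> f (x - \<gamma> *\<^sub>R w) - f x \<le> - \<gamma> * (w \<bullet> g) / 3"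
  proof -
    define \<phi> where "\<phi> \<gamma> = f (x + \<gamma> *\<^sub>R (- w))" for \<gamma>
    have "(\<phi> has_real_derivative (Df (x + 0 *\<^sub>R (- w)) \<bullet> (- w))) (at 0)"
      unfolding \<phi>_def by (rule line_deriv[OF grad])
    then have "(\<phi> has_real_derivative (- (w \<bullet> g))) (at 0)"
      unfolding g_def by (simp add: inner_commute)
    then have "((\<lambda>y. (\<phi> y - \<phi> 0) / (y - 0)) \<longlongrightarrow> - (w \<bullet> g)) (at 0)"
      using has_field_derivative_iff by blast
    moreover have "- (w \<bullet> g) < - (w \<bullet> g) / 3" using wg0 by simp
    ultimately have "eventually (\<lambda>y. (\<phi> y - \<phi> 0) / (y - 0) < - (w \<bullet> g) / 3) (at 0)"
      by (rule order_tendstoD(2))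
    then obtain d where d: "d > 0" and dd: "\<And>y. y \<noteq> 0 \<Longrightarrow> dist y 0 < d \<Longrightarrow> (\<phi> y - \<phi> 0) / (y - 0) < - (w \<bullet> g) / 3"
      unfolding eventually_at by auto
    show ?thesis
    proof (intro exI[of _ d] conjI allI impI d)
      fix \<gamma> :: real assume \<gamma>: "0 < \<gamma> \<and> \<gamma> < d"
      then have "(\<phi> \<gamma> - \<phi> 0) / \<gamma> < - (w \<bullet> g) / 3" using dd[of \<gamma>] by simp
      then have "\<phi> \<gamma> - \<phi> 0 < \<gamma> * (- (w \<bullet> g) / 3)" using \<gamma> by (simp add: pos_divide_less_eq mult.commute)
      then show "f (x - \<gamma> *\<^sub>R w) - f x \<le> - \<gamma> * (w \<bullet> g) / 3" unfolding \<phi>_def by simp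
    qed
  qed
  show ?thesis unfolding Let_def
    using MB part3 unfolding A_def w_def g_def H_def by blast
qed

end
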